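(* Let $G$ be a very well-covered graph and let $M$ be a perfect matching of $G$. Then no edge $xy\in M$ lies on a triangle of $G$, and no edge $xy\in M$ lies on an induced (chordless) cycle of $G$ of length $q\geq 5$. Equivalently: for every $q=3$ or $q\geq5$, no edge of an induced subgraph of $G$ isomorphic to the chordless cycle $C_q$ belongs to a perfect matching of $G$.
   Context: All graphs are finite, simple, undirected. A stable set is a set of pairwise non-adjacent vertices; $\alpha(G)$ is the maximum size of a stable set. $G$ is well-covered if all its maximal stable sets have the same cardinality, and $G$ is very well-covered if it is well-covered, has no isolated vertices, and $|V(G)|=2\alpha(G)$. $C_n$ denotes the chordless cycle on $n\ge 3$ vertices. *)

theory Defs
  imports Main
begin

definition graph :: "'a set \<Rightarrow> 'a set set \<Rightarrow> bool" where
  "graph V E \<longleftrightarrow> finite V \<and> (\<forall>e\<in>E. e \<subseteq> V \<and> card e = 2)"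

definition adj :: "'a set set \<Rightarrow> 'a \<Rightarrow> 'a \<Rightarrow> bool" where
  "adj E x y \<longleftrightarrow> {x, y} \<in> E"

definition stable_set :: "'a set \<Rightarrow> 'a set set \<Rightarrow> 'a set \<Rightarrow> bool" where
  "stable_set V E S \<longleftrightarrow> S \<subseteq> V \<and> (\<forall>x\<in>S. \<forall>y\<in>S. \<not> adj E x y)"

definition maximal_stable_set :: "'a set \<Rightarrow> 'a set set \<Rightarrow> 'a set \<Rightarrow> bool" where
  "maximal_stable_set V E S \<longleftrightarrow> stable_set V E S \<and>
     (\<forall>T. stable_set V E T \<and> S \<subseteq> T \<longrightarrow> T = S)"

definition alpha :: "'a set \<Rightarrow> 'a set set \<Rightarrow> nat" where
  "alpha V E = Max (card ` {S. stable_set V E S})"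

definition well_covered :: "'a set \<Rightarrow> 'a set set \<Rightarrow> bool" where
  "well_covered V E \<longleftrightarrow>
     (\<forall>S T. maximal_stable_set V E S \<and> maximal_stable_set V E T \<longrightarrow> card S = card T)"

definition very_well_covered :: "'a set \<Rightarrow> 'a set set \<Rightarrow> bool" where
  "very_well_covered V E \<longleftrightarrow> well_covered V E \<and>
     (\<forall>v\<in>V. \<exists>u. adj E v u) \<and> card V = 2 * alpha V E"

definition perfect_matching :: "'a set \<Rightarrow> 'a set set \<Rightarrow> 'a set set \<Rightarrow> bool" where
  "perfect_matching V E M \<longleftrightarrow> M \<subseteq> E \<and>
     (\<forall>e\<in>M. \<forall>f\<in>M. e \<noteq> f \<longrightarrow> e \<inter> f = {}) \<and> \<Union>M = V"

definition induced_cycle :: "'a set \<Rightarrow> 'a set set \<Rightarrow> 'a list \<Rightarrow> bool" where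
  "induced_cycle V E c \<longleftrightarrow> length c \<ge> 3 \<and> distinct c \<and> set c \<subseteq> V \<and>
     (\<forall>i<length c. \<forall>j<length c.
        adj E (c ! i) (c ! j) \<longleftrightarrow> (j = (i + 1) mod length c \<or> i = (j + 1) mod length c))"

end

theory Submission
  imports Defs
begin

lemma adj_sym: "adj E x y = adj E y x"
  unfolding adj_def by (simp add: insert_commute)

lemma no_loop: "graph V E \<Longrightarrow> \<not> adj E a a"
  unfolding graph_def adj_def by force

lemma stable_finite: "graph V E \<Longrightarrow> finite {S. stable_set V E S}"
  unfolding graph_def stable_set_def
  by (rule finite_subset[of _ "Pow V"]) auto

lemma extend_max:
  assumes g: "graph V E" and s: "stable_set V E S"
  shows "\<exists>T. S \<subseteq> T \<and> maximal_stable_set V E T"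
proof -
  let ?F = "{T. stable_set V E T \<and> S \<subseteq> T}"
  have fin: "finite ?F" using stable_finite[OF g] by (rule finite_subset[rotated]) auto
  have ne: "S \<in> ?F" using s by auto
  have "Max (card ` ?F) \<in> card ` ?F" using fin ne by (intro Max_in) auto
  then obtain T where T: "T \<in> ?F" and TM: "card T = Max (card ` ?F)" by auto
  have mx: "\<forall>U\<in>?F. card U \<le> card T" using fin TM by auto
  have fV: "finite V" using g graph_def by auto
  have "maximal_stable_set V E T"
    unfolding maximal_stable_set_def
  proof (intro conjI allI impI)
    show "stable_set V E T" using T by auto
    fix U assume U: "stable_set V E U \<and> T \<subseteq> U"
    hence "U \<in> ?F" using T by auto
    hence "card U \<le> card T" using mx by auto
    moreover have "finite U" using U fV stable_set_def finite_subset by metis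
    ultimately show "U = T" using U card_seteq by metis
  qed
  thus ?thesis using T by auto
qed

lemma max_card_alpha:
  assumes g: "graph V E" and wc: "well_covered V E" and S: "maximal_stable_set V E S"
  shows "card S = alpha V E"
proof -
  have fin: "finite (card ` {S. stable_set V E S})" using stable_finite[OF g] by auto
  have ne: "{} \<in> {S. stable_set V E S}" unfolding stable_set_def by auto
  have "alpha V E \<in> card ` {S. stable_set V E S}"
    unfolding alpha_def using fin ne by (intro Max_in) auto
  then obtain T where T: "stable_set V E T" "card T = alpha V E" by auto
  have fV: "finite V" using g graph_def by auto
  have "maximal_stable_set V E T"
    unfolding maximal_stable_set_def
  proof (intro conjI allI impI)
    show "stable_set V E T" by fact
    fix U assume U: "stable_set V E U \<and> T \<subseteq> U"
    have "card U \<le> alpha V E" unfolding alpha_def using fin U by auto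
    moreover have "finite U" using U fV stable_set_def finite_subset by metis
    ultimately show "U = T" using U T card_seteq by metis
  qed
  thus ?thesis using wc S T unfolding well_covered_def by metis
qed

lemma pm_card:
  assumes g: "graph V E" and pm: "perfect_matching V E M"
  shows "card V = 2 * card M" and "finite M"
proof -
  have fV: "finite V" using g graph_def by auto
  have MV: "M \<subseteq> Pow V" using pm unfolding perfect_matching_def by auto
  show fM: "finite M" using MV fV by (meson finite_Pow_iff finite_subset)
  have c2: "\<forall>e\<in>M. card e = 2" using pm g unfolding perfect_matching_def graph_def by auto
  have fe: "\<forall>e\<in>M. finite e" using MV fV by (meson PowD finite_subset subsetD)
  have "card (\<Union>M) = (\<Sum>e\<in>M. card e)"
    using fM fe pm unfolding perfect_matching_def by (intro card_Union_disjoint) (auto simp: pairwise_def disjnt_def)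
  also have "\<dots> = 2 * card M" using c2 by simp
  finally show "card V = 2 * card M" using pm unfolding perfect_matching_def by simp
qed

lemma max_meets:
  assumes g: "graph V E" and vwc: "very_well_covered V E" and pm: "perfect_matching V E M"
    and S: "maximal_stable_set V E S" and e: "e \<in> M"
  shows "S \<inter> e \<noteq> {}"
proof
  assume em: "S \<inter> e = {}"
  have fV: "finite V" using g graph_def by auto
  have fM: "finite M" and cV: "card V = 2 * card M" using pm_card[OF g pm] by auto
  have cS: "card S = card M"
    using max_card_alpha[OF g _ S] vwc cV unfolding very_well_covered_def by auto
  have SV: "S \<subseteq> \<Union>M" using S pm unfolding maximal_stable_set_def stable_set_def perfect_matching_def by auto
  have MV: "M \<subseteq> Pow V" using pm unfolding perfect_matching_def by auto
  have fe: "\<forall>e\<in>M. finite e" using MV fV by (meson PowD finite_subset subsetD)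
  have le1: "\<forall>f\<in>M. card (S \<inter> f) \<le> 1"
  proof
    fix f assume f: "f \<in> M"
    have fE: "f \<in> E" and c2: "card f = 2" using f pm g unfolding perfect_matching_def graph_def by auto
    then obtain u v where uv: "f = {u, v}" "u \<noteq> v" by (meson card_2_iff)
    have "\<not> (u \<in> S \<and> v \<in> S)" using S fE uv unfolding maximal_stable_set_def stable_set_def adj_def by auto
    hence "S \<inter> f \<subseteq> {u} \<or> S \<inter> f \<subseteq> {v}" using uv by auto
    moreover have "card (S \<inter> f) \<le> card {u}" if "S \<inter> f \<subseteq> {u}" using that by (intro card_mono) auto
    moreover have "card (S \<inter> f) \<le> card {v}" if "S \<inter> f \<subseteq> {v}" using that by (intro card_mono) auto
    ultimately show "card (S \<inter> f) \<le> 1" by auto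
  qed
  have "S = (\<Union>f\<in>M. S \<inter> f)" using SV by auto
  moreover have "card (\<Union>f\<in>M. S \<inter> f) = (\<Sum>f\<in>M. card (S \<inter> f))"
  proof (rule card_UN_disjoint)
    show "finite M" by fact
    show "\<forall>f\<in>M. finite (S \<inter> f)" using fe by blast
    show "\<forall>i\<in>M. \<forall>j\<in>M. i \<noteq> j \<longrightarrow> (S \<inter> i) \<inter> (S \<inter> j) = {}"
      using pm unfolding perfect_matching_def by blast
  qed
  ultimately have "card S = (\<Sum>f\<in>M. card (S \<inter> f))" by simp
  also have "\<dots> = (\<Sum>f\<in>M - {e}. card (S \<inter> f))"
    using em e fM by (simp add: sum.remove)
  also have "\<dots> \<le> (\<Sum>f\<in>M - {e}. 1)" using le1 by (intro sum_mono) auto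
  also have "\<dots> = card M - 1" using e fM by simp
  finally have "card S \<le> card M - 1" .
  moreover have "card M > 0" using e fM card_gt_0_iff by blast
  ultimately show False using cS by linarith
qed

lemma key:
  assumes g: "graph V E" and vwc: "very_well_covered V E" and pm: "perfect_matching V E M"
    and xy: "{x, y} \<in> M" and a: "a \<in> V" "adj E a x" and b: "b \<in> V" "adj E b y"
    and ab: "\<not> adj E a b"
  shows False
proof -
  have "stable_set V E {a, b}"
    unfolding stable_set_def using a b ab no_loop[OF g] adj_sym by fastforce
  then obtain S where S: "{a, b} \<subseteq> S" "maximal_stable_set V E S" using extend_max[OF g] by blast
  have "S \<inter> {x, y} \<noteq> {}" using max_meets[OF g vwc pm S(2) xy] .
  moreover have "stable_set V E S" using S(2) maximal_stable_set_def by auto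
  then have st: "\<And>u v. u \<in> S \<Longrightarrow> v \<in> S \<Longrightarrow> \<not> adj E u v" unfolding stable_set_def by auto
  have "a \<in> S" "b \<in> S" using S(1) by auto
  moreover obtain z where "z \<in> S" "z = x \<or> z = y" using \<open>S \<inter> {x, y} \<noteq> {}\<close> by auto
  ultimately show False using st a b by metis
qed

lemma modfacts:
  fixes i n :: nat
  assumes "i < n" "5 \<le> n"
  shows "(i + n - 1) mod n < n" "(i + 2) mod n < n" "(i + 1) mod n < n"
    "((i + n - 1) mod n + 1) mod n = i" "((i + 1) mod n + 1) mod n = (i + 2) mod n"
    "(i + 2) mod n \<noteq> ((i + n - 1) mod n + 1) mod n"
    "(i + n - 1) mod n \<noteq> ((i + 2) mod n + 1) mod n"
proof -
  have a: "(i + n - 1) mod n = (if i = 0 then n - 1 else i - 1)"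
  proof (cases "i = 0")
    case False
    hence "i + n - 1 = (i - 1) + n" by simp
    hence "(i + n - 1) mod n = (i - 1) mod n" by (metis mod_add_self2)
    thus ?thesis using False assms by simp
  qed (use assms in simp)
  have b: "(i + 2) mod n = (if i + 2 < n then i + 2 else i + 2 - n)"
  proof (cases "i + 2 < n")
    case False
    hence "i + 2 = (i + 2 - n) + n" by simp
    hence "(i + 2) mod n = (i + 2 - n) mod n" by (metis mod_add_self2)
    thus ?thesis using False assms by simp
  qed simp
  have mb: "(k + 1) mod n = (if k + 1 < n then k + 1 else 0)" if "k < n" for k
  proof (cases "k + 1 < n")
    case False
    hence "k + 1 = n" using that by simp
    thus ?thesis by simp
  qed simp
  have c: "(i + 1) mod n = (if i + 1 < n then i + 1 else 0)"
    using mb assms by blast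
  show "(i + n - 1) mod n < n" "(i + 2) mod n < n" "(i + 1) mod n < n" using assms by auto
  show "((i + n - 1) mod n + 1) mod n = i" using a assms mb[of "(i + n - 1) mod n"] by auto
  show "((i + 1) mod n + 1) mod n = (i + 2) mod n" using b c assms mb[of "(i + 1) mod n"] by auto
  have d: "((i + n - 1) mod n + 1) mod n = i" using a assms mb[of "(i + n - 1) mod n"] by auto
  show "(i + 2) mod n \<noteq> ((i + n - 1) mod n + 1) mod n" unfolding d b using assms by auto
  show "(i + n - 1) mod n \<noteq> ((i + 2) mod n + 1) mod n"
  proof (cases "i + 2 < n")
    case True
    hence "((i + 2) mod n + 1) mod n = (if i + 3 < n then i + 3 else 0)" using mb[of "i+2"] by simp
    thus ?thesis unfolding a using assms True by auto
  next
    case False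
    hence "((i + 2) mod n + 1) mod n = i + 3 - n" using mb[of "i+2-n"] b assms by auto
    thus ?thesis unfolding a using assms False by auto
  qed
qed

theorem lemma1:
  fixes V :: "'a set" and E M :: "'a set set" and c :: "'a list"
  assumes "graph V E"
    and "very_well_covered V E"
    and "perfect_matching V E M"
    and "induced_cycle V E c"
    and "length c = 3 \<or> length c \<ge> 5"
    and "i < length c"
  shows "{c ! i, c ! ((i + 1) mod length c)} \<notin> M"
proof
  assume xy: "{c ! i, c ! ((i + 1) mod length c)} \<in> M"
  let ?n = "length c"
  have cyc: "\<forall>i<?n. \<forall>j<?n. adj E (c ! i) (c ! j) \<longleftrightarrow> (j = (i + 1) mod ?n \<or> i = (j + 1) mod ?n)"
    and sV: "set c \<subseteq> V" using assms(4) unfolding induced_cycle_def by auto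
  have inV: "\<And>k. k < ?n \<Longrightarrow> c ! k \<in> V" using sV by auto
  show False
  proof (cases "?n = 3")
    case True
    let ?a = "(i + 2) mod ?n"
    have ia: "(?a + 1) mod ?n = i" "?a < ?n" using assms(6) True by (auto simp: mod_Suc)
    have h1: "adj E (c ! ?a) (c ! i)" using cyc assms(6) ia by auto
    have ib: "((i + 1) mod ?n + 1) mod ?n = ?a" "(i + 1) mod ?n < ?n" using assms(6) True by (auto simp: mod_Suc)
    have h2: "adj E (c ! ?a) (c ! ((i + 1) mod ?n))" using cyc assms(6) ib ia by metis
    show False using key[OF assms(1-3) xy inV[OF ia(2)] h1 inV[OF ia(2)] h2] no_loop[OF assms(1)] by auto
  next
    case False
    hence n5: "?n \<ge> 5" using assms(5) by auto
    let ?a = "(i + ?n - 1) mod ?n" and ?b = "(i + 2) mod ?n" and ?y = "(i + 1) mod ?n"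
    have ar: "?a < ?n" "?b < ?n" "?y < ?n" "(?a + 1) mod ?n = i" "(?y + 1) mod ?n = ?b"
      "?b \<noteq> (?a + 1) mod ?n" "?a \<noteq> (?b + 1) mod ?n"
      using modfacts[OF assms(6) n5] by auto
    have h1: "adj E (c ! ?a) (c ! i)" using cyc assms(6) ar by auto
    have h2: "adj E (c ! ?b) (c ! ?y)" using cyc assms(6) ar by metis
    have h3: "\<not> adj E (c ! ?a) (c ! ?b)" using cyc ar by auto
    show False using key[OF assms(1-3) xy inV[OF ar(1)] h1 inV[OF ar(2)] h2 h3] by auto
  qed
qed

end
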